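(* For every odd $k\ge3$, the parity–majority distribution $P_{\rm MAJ}$ (a distribution on functions $\Omega^{2k}\to\{0,1\}$) satisfies SYM, BAL, MIN and UNI, where these conditions are read with arity $2k$ in place of $k$.
   Context: $\Omega=\{\pm1\}$, $q=2$, $k\ge3$ odd. For $\tau\in\Omega^{2k}$ and a permutation $\theta$ of $[2k]$ define $\psi_{\tau,\theta}:\Omega^{2k}\to\{0,1\}$, $\psi_{\tau,\theta}(\sigma)=\mathbf 1\{\prod_{i=1}^k\sigma_{\theta(i)}\tau_i=1\}\mathbf 1\{\sum_{i=k+1}^{2k}\sigma_{\theta(i)}\tau_i<0\}+\mathbf 1\{\prod_{i=1}^k\sigma_{\theta(i)}\tau_i=-1\}\mathbf 1\{\sum_{i=k+1}^{2k}\sigma_{\theta(i)}\tau_i>0\}$. $\Psi=\{\psi_{\tau,\theta}\}$ and $P_{\rm MAJ}$ is uniform on $\Psi$. Let $K=2k$ be the arity, $\boldsymbol\psi$ a sample from $P=P_{\rm MAJ}$, $\xi=q^{-K}\sum_{\sigma\in\Omega^K}\mathbb E[\boldsymbol\psi(\sigma)]$, $\psi^{\theta'}(\sigma)=\psi(\sigma_{\theta'(1)},\dots,\sigma_{\theta'(K)})$. SYM: for all $i\in[K]$, $\omega\in\Omega$, $\psi\in\Psi$, $\sum_{\tau\in\Omega^K}\mathbf 1\{\tau_i=\omega\}\psi(\tau)=q^{K-1}\xi$, and $P(\psi)=P(\psi^{\theta'})$ for every permutation $\theta'$ of $[K]$. BAL: $\phi(\mu)=\sum_{\tau\in\Omega^K}\mathbb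 E[\boldsymbol\psi(\tau)]\prod_{i=1}^K\mu(\tau_i)$ is concave on distributions on $\Omega$ and maximised at the uniform distribution. MIN: among distributions $\rho$ on $\Omega\times\Omega$ with both marginals uniform, $\varphi(\rho)=\sum_{\sigma,\tau\in\Omega^K}\mathbb E[\boldsymbol\psi(\sigma)\boldsymbol\psi(\tau)]\prod_{i=1}^K\rho(\sigma_i,\tau_i)$ has the uniform distribution as unique global minimiser. UNI: every CSP with constraint functions from $\Psi$ (constraint $a$ on a $K$-tuple $\partial a$ of variables) in which each constraint has pairwise distinct variables and whose bipartite variable–constraint graph is unicyclic admits $\sigma$ with $\prod_a\psi_a(\sigma(\partial a))>0$. *)

theory Defs
  imports "HOL-Probability.Probability"
begin

text \<open>Omega = {-1,1} (as integers); an element of Omega^K is an extensional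
  function on the index set {0..<K} (indices shifted by one w.r.t. the paper).\<close>

definition Om :: "int set" where "Om = {-1, 1}"

definition OmK :: "nat \<Rightarrow> (nat \<Rightarrow> int) set" where
  "OmK K = {0..<K} \<rightarrow>\<^sub>E Om"

definition psiMAJ :: "nat \<Rightarrow> (nat \<Rightarrow> int) \<Rightarrow> (nat \<Rightarrow> nat) \<Rightarrow> (nat \<Rightarrow> int) \<Rightarrow> real" where
  "psiMAJ k \<tau> \<theta> \<sigma> =
     (if \<sigma> \<in> OmK (2*k) then
        (if ((\<Prod>i<k. \<sigma> (\<theta> i) * \<tau> i) = 1 \<and> (\<Sum>i\<in>{k..<2*k}. \<sigma> (\<theta> i) * \<tau> i) < 0)
          \<or> ((\<Prod>i<k. \<sigma> (\<theta> i) * \<tau> i) = -1 \<and> (\<Sum>i\<in>{k..<2*k}. \<sigma> (\<theta> i) * \<tau> i) > 0)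
         then 1 else 0)
      else 0)"

definition PsiMAJ :: "nat \<Rightarrow> ((nat \<Rightarrow> int) \<Rightarrow> real) set" where
  "PsiMAJ k = {psiMAJ k \<tau> \<theta> | \<tau> \<theta>. \<tau> \<in> OmK (2*k) \<and> \<theta> permutes {0..<2*k}}"

definition PMAJ :: "nat \<Rightarrow> ((nat \<Rightarrow> int) \<Rightarrow> real) pmf" where
  "PMAJ k = pmf_of_set (PsiMAJ k)"

definition xi :: "nat \<Rightarrow> ((nat \<Rightarrow> int) \<Rightarrow> real) pmf \<Rightarrow> real" where
  "xi K P = (1 / 2 ^ K) * (\<Sum>\<sigma>\<in>OmK K. measure_pmf.expectation P (\<lambda>\<psi>. \<psi> \<sigma>))"

definition permfun :: "((nat \<Rightarrow> int) \<Rightarrow> real) \<Rightarrow> (nat \<Rightarrow> nat) \<Rightarrow> ((nat \<Rightarrow> int) \<Rightarrow> real)" where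
  "permfun \<psi> \<theta>' = (\<lambda>\<sigma>. \<psi> (\<lambda>i. \<sigma> (\<theta>' i)))"

definition SYM_cond :: "nat \<Rightarrow> ((nat \<Rightarrow> int) \<Rightarrow> real) set \<Rightarrow> ((nat \<Rightarrow> int) \<Rightarrow> real) pmf \<Rightarrow> bool" where
  "SYM_cond K Psi P \<longleftrightarrow>
     (\<forall>i<K. \<forall>\<omega>\<in>Om. \<forall>\<psi>\<in>Psi.
        (\<Sum>\<tau>\<in>OmK K. (if \<tau> i = \<omega> then 1 else 0) * \<psi> \<tau>) = 2 ^ (K - 1) * xi K P)
   \<and> (\<forall>\<theta>'. \<theta>' permutes {0..<K} \<longrightarrow> (\<forall>\<psi>. pmf P \<psi> = pmf P (permfun \<psi> \<theta>')))"

definition distOm :: "(int \<Rightarrow> real) \<Rightarrow> bool" where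
  "distOm \<mu> \<longleftrightarrow> (\<forall>x. \<mu> x \<ge> 0) \<and> (\<forall>x. x \<notin> Om \<longrightarrow> \<mu> x = 0) \<and> (\<Sum>x\<in>Om. \<mu> x) = 1"

definition unifOm :: "int \<Rightarrow> real" where
  "unifOm = (\<lambda>x. if x \<in> Om then 1/2 else 0)"

definition phiBAL :: "nat \<Rightarrow> ((nat \<Rightarrow> int) \<Rightarrow> real) pmf \<Rightarrow> (int \<Rightarrow> real) \<Rightarrow> real" where
  "phiBAL K P \<mu> = (\<Sum>\<tau>\<in>OmK K. measure_pmf.expectation P (\<lambda>\<psi>. \<psi> \<tau>) * (\<Prod>i<K. \<mu> (\<tau> i)))"

definition BAL_cond :: "nat \<Rightarrow> ((nat \<Rightarrow> int) \<Rightarrow> real) pmf \<Rightarrow> bool" where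
  "BAL_cond K P \<longleftrightarrow>
     (\<forall>\<mu>1 \<mu>2 t. distOm \<mu>1 \<longrightarrow> distOm \<mu>2 \<longrightarrow> 0 \<le> t \<longrightarrow> t \<le> 1 \<longrightarrow>
        t * phiBAL K P \<mu>1 + (1 - t) * phiBAL K P \<mu>2
          \<le> phiBAL K P (\<lambda>x. t * \<mu>1 x + (1 - t) * \<mu>2 x))
   \<and> (\<forall>\<mu>. distOm \<mu> \<longrightarrow> phiBAL K P \<mu> \<le> phiBAL K P unifOm)"

definition coupOm :: "(int \<times> int \<Rightarrow> real) \<Rightarrow> bool" where
  "coupOm \<rho> \<longleftrightarrow> (\<forall>z. \<rho> z \<ge> 0) \<and> (\<forall>z. z \<notin> Om \<times> Om \<longrightarrow> \<rho> z = 0)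
     \<and> (\<forall>a\<in>Om. (\<Sum>b\<in>Om. \<rho> (a, b)) = 1/2) \<and> (\<forall>b\<in>Om. (\<Sum>a\<in>Om. \<rho> (a, b)) = 1/2)"

definition unifOm2 :: "int \<times> int \<Rightarrow> real" where
  "unifOm2 = (\<lambda>z. if z \<in> Om \<times> Om then 1/4 else 0)"

definition phiMIN :: "nat \<Rightarrow> ((nat \<Rightarrow> int) \<Rightarrow> real) pmf \<Rightarrow> (int \<times> int \<Rightarrow> real) \<Rightarrow> real" where
  "phiMIN K P \<rho> = (\<Sum>\<sigma>\<in>OmK K. \<Sum>\<tau>\<in>OmK K.
      measure_pmf.expectation P (\<lambda>\<psi>. \<psi> \<sigma> * \<psi> \<tau>) * (\<Prod>i<K. \<rho> (\<sigma> i, \<tau> i)))"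

definition MIN_cond :: "nat \<Rightarrow> ((nat \<Rightarrow> int) \<Rightarrow> real) pmf \<Rightarrow> bool" where
  "MIN_cond K P \<longleftrightarrow> (\<forall>\<rho>. coupOm \<rho> \<longrightarrow> \<rho> \<noteq> unifOm2 \<longrightarrow> phiMIN K P unifOm2 < phiMIN K P \<rho>)"

text \<open>CSPs: variables V, constraints F, each constraint a has a K-tuple of
  variables dv a (a list) and a constraint function ps a.\<close>

definition bigraph :: "('c \<Rightarrow> 'v list) \<Rightarrow> 'c set \<Rightarrow> (('v + 'c) \<times> ('v + 'c)) set" where
  "bigraph dv F = {(Inl v, Inr a) | v a. a \<in> F \<and> v \<in> set (dv a)}
                \<union> {(Inr a, Inl v) | v a. a \<in> F \<and> v \<in> set (dv a)}"

text \<open>Unicyclic: the (finite, simple) bipartite factor graph is connected and has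
  exactly as many edges as vertices (equivalently, it is connected and contains exactly one cycle).\<close>
definition unicyclic_csp :: "nat \<Rightarrow> ((nat \<Rightarrow> int) \<Rightarrow> real) set \<Rightarrow> 'v set \<Rightarrow> 'c set
    \<Rightarrow> ('c \<Rightarrow> 'v list) \<Rightarrow> ('c \<Rightarrow> (nat \<Rightarrow> int) \<Rightarrow> real) \<Rightarrow> bool" where
  "unicyclic_csp K Psi V F dv ps \<longleftrightarrow>
     finite V \<and> finite F
   \<and> (\<forall>a\<in>F. length (dv a) = K \<and> distinct (dv a) \<and> set (dv a) \<subseteq> V \<and> ps a \<in> Psi)
   \<and> (\<forall>x\<in>Inl ` V \<union> Inr ` F. \<forall>y\<in>Inl ` V \<union> Inr ` F. (x, y) \<in> (bigraph dv F)\<^sup>*)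
   \<and> card {(v, a). a \<in> F \<and> v \<in> set (dv a)} = card V + card F"

definition tuple_of :: "nat \<Rightarrow> ('v \<Rightarrow> int) \<Rightarrow> 'v list \<Rightarrow> nat \<Rightarrow> int" where
  "tuple_of K \<sigma> xs = (\<lambda>i. if i < K then \<sigma> (xs ! i) else undefined)"

definition satisfiable_csp :: "nat \<Rightarrow> 'v set \<Rightarrow> 'c set
    \<Rightarrow> ('c \<Rightarrow> 'v list) \<Rightarrow> ('c \<Rightarrow> (nat \<Rightarrow> int) \<Rightarrow> real) \<Rightarrow> bool" where
  "satisfiable_csp K V F dv ps \<longleftrightarrow>
     (\<exists>\<sigma>. (\<forall>v\<in>V. \<sigma> v \<in> Om) \<and> (\<Prod>a\<in>F. ps a (tuple_of K \<sigma> (dv a))) > 0)"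

end

theory Submission
  imports Defs
begin

lemma Om_iff: "x \<in> Om \<longleftrightarrow> x = -1 \<or> x = 1" by (auto simp: Om_def)

lemma OmK_mem: "\<sigma> \<in> OmK n \<longleftrightarrow> (\<forall>i<n. \<sigma> i \<in> Om) \<and> (\<forall>i. i \<ge> n \<longrightarrow> \<sigma> i = undefined)"
  by (auto simp: OmK_def PiE_def extensional_def Pi_def)

lemma finite_OmK: "finite (OmK n)" unfolding OmK_def by (auto intro!: finite_PiE simp: Om_def)

lemma card_Om: "card Om = 2" by (simp add: Om_def)

lemma card_OmK: "card (OmK n) = 2^n"
  unfolding OmK_def by (simp add: card_PiE card_Om)

lemma mult_pm: "a \<in> Om \<Longrightarrow> b \<in> Om \<Longrightarrow> a*b \<in> {1,-1::int}"
  by (auto simp: Om_iff)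

lemma prod_negf: "finite A \<Longrightarrow> (\<Prod>i\<in>A. - f i) = (-1)^card A * (prod f A :: int)"
  by (induction A rule: finite_induct) auto

lemma inv_sum:
  fixes f u :: "'a \<Rightarrow> real"
  assumes "finite A" "\<And>x. x\<in>A \<Longrightarrow> g x \<in> A" "\<And>x. x\<in>A \<Longrightarrow> g (g x) = x"
    "\<And>x. x\<in>A \<Longrightarrow> f (g x) = u x - f x"
  shows "sum f A = sum u A / 2"
proof -
  have bij: "bij_betw g A A"
    by (rule bij_betwI[where g=g]) (auto simp: assms)
  have "sum f A = sum (\<lambda>x. f (g x)) A" using sum.reindex_bij_betw[OF bij, of f] by simp
  also have "... = sum (\<lambda>x. u x - f x) A" using assms(4) by (intro sum.cong) auto
  also have "... = sum u A - sum f A" by (simp add: sum_subtractf)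
  finally show ?thesis by simp
qed

definition flipc :: "nat \<Rightarrow> (nat \<Rightarrow> int) \<Rightarrow> (nat \<Rightarrow> int)" where
  "flipc p \<sigma> = \<sigma>(p := - \<sigma> p)"

lemma flipc_OmK: "p < n \<Longrightarrow> \<sigma> \<in> OmK n \<Longrightarrow> flipc p \<sigma> \<in> OmK n"
  by (auto simp: OmK_mem flipc_def Om_iff)

lemma flipc_flipc[simp]: "flipc p (flipc p \<sigma>) = \<sigma>"
  by (auto simp: flipc_def)

lemma card_slice: assumes "i < n" "\<omega> \<in> Om"
  shows "(\<Sum>\<tau>\<in>OmK n. (if \<tau> i = \<omega> then 1 else 0 :: real)) = 2^n / 2"
proof -
  have "(\<Sum>\<tau>\<in>OmK n. (if \<tau> i = \<omega> then 1 else 0 :: real)) = (\<Sum>\<tau>\<in>OmK n. 1) / 2"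
  proof (rule inv_sum[where g="flipc i"])
    fix x assume x: "x \<in> OmK n"
    then have "x i \<in> Om" using assms by (auto simp: OmK_mem)
    then show "(if flipc i x i = \<omega> then 1 else 0 :: real) = 1 - (if x i = \<omega> then 1 else 0)"
      using assms(2) by (auto simp: flipc_def Om_iff)
  qed (auto simp: finite_OmK flipc_OmK assms)
  then show ?thesis by (simp add: card_OmK)
qed

lemma prod_pm: "finite A \<Longrightarrow> (\<forall>i\<in>A. f i \<in> {1,-1::int}) \<Longrightarrow> prod f A \<in> {1,-1}"
  by (induction A rule: finite_induct) auto

lemma sum_odd: "finite A \<Longrightarrow> (\<forall>i\<in>A. f i \<in> {1,-1::int}) \<Longrightarrow> odd (sum f A) = odd (card A)"
  by (induction A rule: finite_induct) auto

lemma prod_neg_one: "finite A \<Longrightarrow> j \<in> A \<Longrightarrow> (\<Prod>i\<in>A. (if i = j then - a i else a i)) = - (prod a A :: int)"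
proof -
  assume "finite A" "j \<in> A"
  then have "(\<Prod>i\<in>A. (if i = j then - a i else a i)) = (- a j) * (\<Prod>i\<in>A-{j}. (if i = j then - a i else a i))"
    by (simp add: prod.remove)
  also have "(\<Prod>i\<in>A-{j}. (if i = j then - a i else a i)) = prod a (A - {j})"
    by (intro prod.cong) auto
  also have "- a j * prod a (A - {j}) = - prod a A" using \<open>finite A\<close> \<open>j \<in> A\<close>
    by (simp add: prod.remove)
  finally show ?thesis .
qed

definition PP :: "nat \<Rightarrow> (nat \<Rightarrow> int) \<Rightarrow> (nat \<Rightarrow> nat) \<Rightarrow> (nat \<Rightarrow> int) \<Rightarrow> int" where
  "PP k \<tau> \<theta> \<sigma> = (\<Prod>i<k. \<sigma> (\<theta> i) * \<tau> i)"
definition SS :: "nat \<Rightarrow> (nat \<Rightarrow> int) \<Rightarrow> (nat \<Rightarrow> nat) \<Rightarrow> (nat \<Rightarrow> int) \<Rightarrow> int" where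
  "SS k \<tau> \<theta> \<sigma> = (\<Sum>i\<in>{k..<2*k}. \<sigma> (\<theta> i) * \<tau> i)"
definition core :: "int \<Rightarrow> int \<Rightarrow> real" where
  "core P S = (if (P = 1 \<and> S < 0) \<or> (P = -1 \<and> S > 0) then 1 else 0)"

lemma psiMAJ_core: "psiMAJ k \<tau> \<theta> \<sigma> = (if \<sigma> \<in> OmK (2*k) then core (PP k \<tau> \<theta> \<sigma>) (SS k \<tau> \<theta> \<sigma>) else 0)"
  unfolding psiMAJ_def core_def PP_def SS_def by simp

lemma psiMAJ_01: "psiMAJ k \<tau> \<theta> \<sigma> = 0 \<or> psiMAJ k \<tau> \<theta> \<sigma> = 1"
  unfolding psiMAJ_def by auto

lemma core_neg1: "P \<in> {1,-1} \<Longrightarrow> S \<noteq> 0 \<Longrightarrow> core (-P) S = 1 - core P S"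
  by (auto simp: core_def)

lemma core_neg2: "core (-P) (-S) = core P S"
  by (auto simp: core_def)

locale pm =
  fixes k :: nat and \<tau> :: "nat \<Rightarrow> int" and \<theta> :: "nat \<Rightarrow> nat"
  assumes oddk: "odd k" and k3: "k \<ge> 3" and tau: "\<tau> \<in> OmK (2*k)" and perm: "\<theta> permutes {0..<2*k}"
begin

lemma th_lt: "i < 2*k \<Longrightarrow> \<theta> i < 2*k"
  using permutes_in_image[OF perm] by auto

lemma th_inj: "i < 2*k \<Longrightarrow> j < 2*k \<Longrightarrow> \<theta> i = \<theta> j \<longleftrightarrow> i = j"
  using permutes_inj[OF perm] by (auto dest: injD)

lemma term_pm: "\<sigma> \<in> OmK (2*k) \<Longrightarrow> i < 2*k \<Longrightarrow> \<sigma> (\<theta> i) * \<tau> i \<in> {1,-1}"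
proof -
  assume "\<sigma> \<in> OmK (2*k)" "i < 2*k"
  then have "\<sigma> (\<theta> i) \<in> Om" "\<tau> i \<in> Om" using th_lt[of i] tau by (auto simp: OmK_mem)
  then show ?thesis by (rule mult_pm)
qed

lemma PP_pm: assumes s: "\<sigma> \<in> OmK (2*k)" shows "PP k \<tau> \<theta> \<sigma> \<in> {1,-1}"
proof -
  have "\<And>i. i<k \<Longrightarrow> \<sigma> (\<theta> i) * \<tau> i \<in> {1,-1}" by (rule term_pm[OF s]) simp
  then show ?thesis unfolding PP_def by (intro prod_pm) auto
qed

lemma SS_nz: "\<sigma> \<in> OmK (2*k) \<Longrightarrow> SS k \<tau> \<theta> \<sigma> \<noteq> 0"
proof -
  assume s: "\<sigma> \<in> OmK (2*k)"
  have "\<And>i. i \<in> {k..<2*k} \<Longrightarrow> \<sigma> (\<theta> i) * \<tau> i \<in> {1,-1}" by (rule term_pm[OF s]) simp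
  then have "odd (SS k \<tau> \<theta> \<sigma>) = odd (card {k..<2*k})"
    unfolding SS_def by (intro sum_odd) auto
  then have "odd (SS k \<tau> \<theta> \<sigma>)" using oddk by simp
  then show ?thesis by auto
qed

lemma psi_flip: assumes s: "\<sigma> \<in> OmK (2*k)" and j: "j < k"
  shows "psiMAJ k \<tau> \<theta> (flipc (\<theta> j) \<sigma>) = 1 - psiMAJ k \<tau> \<theta> \<sigma>"
proof -
  have jj: "\<theta> j < 2*k" using th_lt j by auto
  have "PP k \<tau> \<theta> (flipc (\<theta> j) \<sigma>) = (\<Prod>i<k. (if i = j then - (\<sigma> (\<theta> i) * \<tau> i) else \<sigma> (\<theta> i) * \<tau> i))"
    unfolding PP_def flipc_def using th_inj j by (intro prod.cong) auto
  also have "... = - PP k \<tau> \<theta> \<sigma>" unfolding PP_def using j by (subst prod_neg_one) auto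
  finally have P: "PP k \<tau> \<theta> (flipc (\<theta> j) \<sigma>) = - PP k \<tau> \<theta> \<sigma>" .
  have S: "SS k \<tau> \<theta> (flipc (\<theta> j) \<sigma>) = SS k \<tau> \<theta> \<sigma>"
    unfolding SS_def flipc_def using th_inj j by (intro sum.cong) auto
  show ?thesis using flipc_OmK[OF jj s] s
    by (simp add: psiMAJ_core P S core_neg1[OF PP_pm[OF s] SS_nz[OF s]])
qed

definition negc :: "(nat \<Rightarrow> int) \<Rightarrow> (nat \<Rightarrow> int)" where
  "negc \<sigma> = (\<lambda>i. if i < 2*k then - \<sigma> i else \<sigma> i)"

lemma negc_OmK: "\<sigma> \<in> OmK (2*k) \<Longrightarrow> negc \<sigma> \<in> OmK (2*k)"
  by (auto simp: OmK_mem negc_def Om_iff)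

lemma negc_negc[simp]: "negc (negc \<sigma>) = \<sigma>"
  by (auto simp: negc_def)

lemma psi_neg: assumes s: "\<sigma> \<in> OmK (2*k)"
  shows "psiMAJ k \<tau> \<theta> (negc \<sigma>) = psiMAJ k \<tau> \<theta> \<sigma>"
proof -
  have "PP k \<tau> \<theta> (negc \<sigma>) = (\<Prod>i<k. - (\<sigma> (\<theta> i) * \<tau> i))"
    unfolding PP_def negc_def using th_lt by (intro prod.cong) auto
  also have "... = (-1)^k * PP k \<tau> \<theta> \<sigma>" unfolding PP_def by (subst prod_negf) auto
  also have "... = - PP k \<tau> \<theta> \<sigma>" using oddk by simp
  finally have P: "PP k \<tau> \<theta> (negc \<sigma>) = - PP k \<tau> \<theta> \<sigma>" .
  have "SS k \<tau> \<theta> (negc \<sigma>) = (\<Sum>i\<in>{k..<2*k}. - (\<sigma> (\<theta> i) * \<tau> i))"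
    unfolding SS_def negc_def using th_lt by (intro sum.cong) auto
  also have "... = - SS k \<tau> \<theta> \<sigma>" unfolding SS_def by (simp add: sum_negf)
  finally have S: "SS k \<tau> \<theta> (negc \<sigma>) = - SS k \<tau> \<theta> \<sigma>" .
  show ?thesis using negc_OmK[OF s] s by (simp add: psiMAJ_core P S core_neg2)
qed

lemma psi_sum: "(\<Sum>\<sigma>\<in>OmK (2*k). psiMAJ k \<tau> \<theta> \<sigma>) = 2^(2*k) / 2"
proof -
  have "(\<Sum>\<sigma>\<in>OmK (2*k). psiMAJ k \<tau> \<theta> \<sigma>) = (\<Sum>\<sigma>\<in>OmK (2*k). 1) / 2"
    by (rule inv_sum[where g="flipc (\<theta> 0)"])
       (use k3 th_lt in \<open>auto simp: finite_OmK flipc_OmK psi_flip\<close>)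
  then show ?thesis by (simp add: card_OmK)
qed

lemma psi_slice: assumes "i < 2*k" "\<omega> \<in> Om"
  shows "(\<Sum>\<sigma>\<in>OmK (2*k). (if \<sigma> i = \<omega> then 1 else 0) * psiMAJ k \<tau> \<theta> \<sigma>) = 2^(2*k) / 4"
proof -
  obtain j where j: "j < k" "\<theta> j \<noteq> i"
  proof (cases "\<theta> 0 = i")
    case True
    then have "\<theta> 1 \<noteq> i" using th_inj[of 0 1] k3 by auto
    then show ?thesis using that[of 1] k3 by auto
  next
    case False then show ?thesis using that[of 0] k3 by auto
  qed
  have jj: "\<theta> j < 2*k" using th_lt j by auto
  have "(\<Sum>\<sigma>\<in>OmK (2*k). (if \<sigma> i = \<omega> then 1 else 0) * psiMAJ k \<tau> \<theta> \<sigma>)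
      = (\<Sum>\<sigma>\<in>OmK (2*k). (if \<sigma> i = \<omega> then 1 else 0)) / 2"
  proof (rule inv_sum[where g="flipc (\<theta> j)"])
    fix x assume x: "x \<in> OmK (2*k)"
    have "flipc (\<theta> j) x i = x i" using j by (simp add: flipc_def)
    then show "(if flipc (\<theta> j) x i = \<omega> then 1 else 0) * psiMAJ k \<tau> \<theta> (flipc (\<theta> j) x) =
         (if x i = \<omega> then 1 else 0) - (if x i = \<omega> then 1 else 0) * psiMAJ k \<tau> \<theta> x"
      using psi_flip[OF x j(1)] by (simp add: algebra_simps)
  qed (use jj in \<open>auto simp: finite_OmK flipc_OmK\<close>)
  also have "... = 2^(2*k) / 4" using card_slice[OF assms] by simp
  finally show ?thesis .
qed

end

lemma Psi_eq: "PsiMAJ k = (\<lambda>(\<tau>,\<theta>). psiMAJ k \<tau> \<theta>) ` (OmK (2*k) \<times> {\<theta>. \<theta> permutes {0..<2*k}})"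
  by (auto simp: PsiMAJ_def)

lemma finite_Psi: "finite (PsiMAJ k)"
  unfolding Psi_eq by (intro finite_imageI finite_cartesian_product finite_OmK finite_permutations) auto

lemma Psi_ne: "PsiMAJ k \<noteq> {}"
proof -
  have "(\<lambda>i. if i < 2*k then 1 else undefined) \<in> OmK (2*k)" by (auto simp: OmK_mem Om_iff)
  moreover have "id permutes {0..<2*k}" by (rule permutes_id)
  ultimately show ?thesis unfolding PsiMAJ_def by blast
qed

lemma card_Psi_pos: "card (PsiMAJ k) > 0"
  using finite_Psi Psi_ne by (simp add: card_gt_0_iff)

lemma expect_PMAJ: "measure_pmf.expectation (PMAJ k) f = sum f (PsiMAJ k) / card (PsiMAJ k)"
  unfolding PMAJ_def by (rule integral_pmf_of_set[OF Psi_ne finite_Psi])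

lemma pmf_PMAJ: "pmf (PMAJ k) \<psi> = indicator (PsiMAJ k) \<psi> / card (PsiMAJ k)"
  unfolding PMAJ_def by (rule pmf_of_set[OF Psi_ne finite_Psi])

lemma Psi_pm: assumes "\<psi> \<in> PsiMAJ k" "odd k" "k \<ge> 3"
  obtains \<tau> \<theta> where "\<psi> = psiMAJ k \<tau> \<theta>" "pm k \<tau> \<theta>"
  using assms unfolding PsiMAJ_def pm_def by blast

lemma xi_val: assumes "odd k" "k \<ge> 3" shows "xi (2*k) (PMAJ k) = 1/2"
proof -
  have "(\<Sum>\<sigma>\<in>OmK (2*k). measure_pmf.expectation (PMAJ k) (\<lambda>\<psi>. \<psi> \<sigma>))
      = (\<Sum>\<sigma>\<in>OmK (2*k). \<Sum>\<psi>\<in>PsiMAJ k. \<psi> \<sigma>) / card (PsiMAJ k)"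
    by (simp add: expect_PMAJ sum_divide_distrib)
  also have "(\<Sum>\<sigma>\<in>OmK (2*k). \<Sum>\<psi>\<in>PsiMAJ k. \<psi> \<sigma>) = (\<Sum>\<psi>\<in>PsiMAJ k. \<Sum>\<sigma>\<in>OmK (2*k). \<psi> \<sigma>)"
    by (rule sum.swap)
  also have "... = (\<Sum>\<psi>\<in>PsiMAJ k. 2^(2*k)/2)"
  proof (rule sum.cong)
    fix \<psi> assume "\<psi> \<in> PsiMAJ k"
    then obtain \<tau> \<theta> where "\<psi> = psiMAJ k \<tau> \<theta>" "pm k \<tau> \<theta>" using Psi_pm assms by blast
    then show "(\<Sum>\<sigma>\<in>OmK (2*k). \<psi> \<sigma>) = 2^(2*k)/2" using pm.psi_sum by blast
  qed simp
  finally show ?thesis using card_Psi_pos[of k] by (simp add: xi_def)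
qed

lemma OmK_comp1: assumes "\<theta>' permutes {0..<n}" "\<sigma> \<in> OmK n"
  shows "(\<lambda>i. \<sigma> (\<theta>' i)) \<in> OmK n"
  using assms permutes_in_image[OF assms(1)] permutes_not_in[OF assms(1)]
  by (auto simp: OmK_mem)

lemma OmK_comp: assumes "\<theta>' permutes {0..<n}"
  shows "(\<lambda>i. \<sigma> (\<theta>' i)) \<in> OmK n \<longleftrightarrow> \<sigma> \<in> OmK n"
proof
  assume "(\<lambda>i. \<sigma> (\<theta>' i)) \<in> OmK n"
  from OmK_comp1[OF permutes_inv[OF assms] this]
  show "\<sigma> \<in> OmK n" using permutes_inverses[OF assms] by simp
qed (rule OmK_comp1[OF assms])

lemma permfun_psi: assumes "\<theta>' permutes {0..<2*k}"
  shows "permfun (psiMAJ k \<tau> \<theta>) \<theta>' = psiMAJ k \<tau> (\<theta>' \<circ> \<theta>)"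
  unfolding permfun_def psiMAJ_def using OmK_comp[OF assms] by (intro ext) simp

lemma permfun_Psi: assumes "\<theta>' permutes {0..<2*k}" "\<psi> \<in> PsiMAJ k"
  shows "permfun \<psi> \<theta>' \<in> PsiMAJ k"
proof -
  obtain \<tau> \<theta> where e: "\<psi> = psiMAJ k \<tau> \<theta>" "\<tau> \<in> OmK (2*k)" "\<theta> permutes {0..<2*k}"
    using assms(2) unfolding PsiMAJ_def by blast
  have "permfun \<psi> \<theta>' = psiMAJ k \<tau> (\<theta>' \<circ> \<theta>)" using e(1) permfun_psi[OF assms(1)] by simp
  moreover have "\<theta>' \<circ> \<theta> permutes {0..<2*k}" by (rule permutes_compose[OF e(3) assms(1)])
  ultimately show ?thesis using e(2) unfolding PsiMAJ_def by blast
qed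

lemma permfun_inv: assumes "\<theta>' permutes {0..<2*k}"
  shows "permfun (permfun \<psi> \<theta>') (inv \<theta>') = \<psi>"
  unfolding permfun_def using permutes_inverses[OF assms] by simp

lemma permfun_Psi_iff: assumes "\<theta>' permutes {0..<2*k}"
  shows "permfun \<psi> \<theta>' \<in> PsiMAJ k \<longleftrightarrow> \<psi> \<in> PsiMAJ k"
  using permfun_Psi[OF assms] permfun_Psi[OF permutes_inv[OF assms], of "permfun \<psi> \<theta>'"]
    permfun_inv[OF assms] by auto

lemma SYM: assumes "odd k" "k \<ge> 3" shows "SYM_cond (2*k) (PsiMAJ k) (PMAJ k)"
  unfolding SYM_cond_def
proof (intro conjI allI impI ballI)
  fix i \<omega> \<psi> assume i: "i < 2*k" and w: "\<omega> \<in> Om" and p: "\<psi> \<in> PsiMAJ k"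
  then obtain \<tau> \<theta> where e: "\<psi> = psiMAJ k \<tau> \<theta>" "pm k \<tau> \<theta>" using Psi_pm assms by blast
  have "(2::real)^(2*k) = 2^(2*k-1) * 2" using assms
    by (metis One_nat_def Suc_pred mult_pos_pos not_numeral_le_zero not_gr_zero pos2 power_Suc2 le0)
  then have eq: "(2::real)^(2*k-1) * (1/2) = 2^(2*k)/4" by simp
  show "(\<Sum>\<tau>\<in>OmK (2*k). (if \<tau> i = \<omega> then 1 else 0) * \<psi> \<tau>) = 2 ^ (2*k - 1) * xi (2*k) (PMAJ k)"
    unfolding e(1) xi_val[OF assms] eq by (rule pm.psi_slice[OF e(2) i w])
next
  fix \<theta>' \<psi> assume "\<theta>' permutes {0..<2*k}"
  then show "pmf (PMAJ k) \<psi> = pmf (PMAJ k) (permfun \<psi> \<theta>')"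
    by (simp add: pmf_PMAJ permfun_Psi_iff indicator_def)
qed

definition hflip :: "nat \<Rightarrow> ((nat \<Rightarrow> int) \<Rightarrow> real) \<Rightarrow> ((nat \<Rightarrow> int) \<Rightarrow> real)" where
  "hflip n \<psi> = (\<lambda>\<sigma>. if \<sigma> \<in> OmK n then 1 - \<psi> \<sigma> else 0)"

lemma (in pm) hflip_psi: "hflip (2*k) (psiMAJ k \<tau> \<theta>) = psiMAJ k (flipc 0 \<tau>) \<theta>"
proof (rule ext)
  fix \<sigma> show "hflip (2*k) (psiMAJ k \<tau> \<theta>) \<sigma> = psiMAJ k (flipc 0 \<tau>) \<theta> \<sigma>"
  proof (cases "\<sigma> \<in> OmK (2*k)")
    case s: True
    have "PP k (flipc 0 \<tau>) \<theta> \<sigma> = (\<Prod>i<k. (if i = 0 then - (\<sigma> (\<theta> i) * \<tau> i) else \<sigma> (\<theta> i) * \<tau> i))"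
      unfolding PP_def flipc_def by (intro prod.cong) auto
    also have "... = - PP k \<tau> \<theta> \<sigma>" unfolding PP_def using k3 by (subst prod_neg_one) auto
    finally have P: "PP k (flipc 0 \<tau>) \<theta> \<sigma> = - PP k \<tau> \<theta> \<sigma>" .
    have S: "SS k (flipc 0 \<tau>) \<theta> \<sigma> = SS k \<tau> \<theta> \<sigma>"
      unfolding SS_def flipc_def using k3 by (intro sum.cong) auto
    show ?thesis using s
      by (simp add: hflip_def psiMAJ_core P S core_neg1[OF PP_pm[OF s] SS_nz[OF s]])
  qed (simp add: hflip_def psiMAJ_def)
qed

lemma (in pm) pm_flip0: "pm k (flipc 0 \<tau>) \<theta>"
  using oddk k3 perm flipc_OmK[OF _ tau, of 0] by (simp add: pm_def)

lemma expect_point: assumes "odd k" "k \<ge> 3" "\<sigma> \<in> OmK (2*k)"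
  shows "measure_pmf.expectation (PMAJ k) (\<lambda>\<psi>. \<psi> \<sigma>) = 1/2"
proof -
  have "(\<Sum>\<psi>\<in>PsiMAJ k. \<psi> \<sigma>) = (\<Sum>\<psi>\<in>PsiMAJ k. 1) / 2"
  proof (rule inv_sum[where g="hflip (2*k)"])
    fix \<psi> assume "\<psi> \<in> PsiMAJ k"
    then obtain \<tau> \<theta> where e: "\<psi> = psiMAJ k \<tau> \<theta>" "pm k \<tau> \<theta>" using Psi_pm assms by blast
    show "hflip (2*k) \<psi> \<in> PsiMAJ k" using pm.hflip_psi[OF e(2)] pm.pm_flip0[OF e(2)] e(1)
      unfolding PsiMAJ_def pm_def by auto
    show "hflip (2*k) (hflip (2*k) \<psi>) = \<psi>" using e(1)
      by (auto simp: hflip_def psiMAJ_def fun_eq_iff)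
    show "hflip (2*k) \<psi> \<sigma> = 1 - \<psi> \<sigma>" using assms(3) by (simp add: hflip_def)
  qed (rule finite_Psi)
  then show ?thesis using card_Psi_pos[of k] by (simp add: expect_PMAJ)
qed

lemma OmK_PiE: "OmK n = PiE {..<n} (\<lambda>_. Om)"
  by (simp add: OmK_def atLeast0LessThan)

lemma phiBAL_val: assumes "odd k" "k \<ge> 3"
  shows "phiBAL (2*k) (PMAJ k) \<mu> = (1/2) * (\<Sum>x\<in>Om. \<mu> x)^(2*k)"
proof -
  have "phiBAL (2*k) (PMAJ k) \<mu> = (\<Sum>\<tau>\<in>OmK (2*k). (1/2) * (\<Prod>i<2*k. \<mu> (\<tau> i)))"
    unfolding phiBAL_def using expect_point[OF assms] by (intro sum.cong) auto
  also have "... = (1/2) * (\<Sum>\<tau>\<in>OmK (2*k). (\<Prod>i<2*k. \<mu> (\<tau> i)))"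
    by (simp add: sum_distrib_left)
  also have "(\<Sum>\<tau>\<in>OmK (2*k). (\<Prod>i<2*k. \<mu> (\<tau> i))) = (\<Prod>i<2*k. \<Sum>x\<in>Om. \<mu> x)"
    unfolding OmK_PiE by (subst prod_sum_PiE) (auto simp: Om_def)
  finally show ?thesis by simp
qed

lemma BAL: assumes "odd k" "k \<ge> 3" shows "BAL_cond (2*k) (PMAJ k)"
  unfolding BAL_cond_def
proof (intro conjI allI impI)
  fix \<mu>1 \<mu>2 :: "int \<Rightarrow> real" and t :: real
  assume d: "distOm \<mu>1" "distOm \<mu>2"
  have s1: "(\<Sum>x\<in>Om. \<mu>1 x) = 1" and s2: "(\<Sum>x\<in>Om. \<mu>2 x) = 1" using d by (auto simp: distOm_def)
  have "(\<Sum>x\<in>Om. t * \<mu>1 x + (1 - t) * \<mu>2 x) = t * (\<Sum>x\<in>Om. \<mu>1 x) + (1-t) * (\<Sum>x\<in>Om. \<mu>2 x)"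
    by (simp add: sum.distrib sum_distrib_left)
  then have c: "(\<Sum>x\<in>Om. t * \<mu>1 x + (1 - t) * \<mu>2 x) = 1" using s1 s2 by simp
  show "t * phiBAL (2*k) (PMAJ k) \<mu>1 + (1 - t) * phiBAL (2*k) (PMAJ k) \<mu>2
     \<le> phiBAL (2*k) (PMAJ k) (\<lambda>x. t * \<mu>1 x + (1 - t) * \<mu>2 x)"
    unfolding phiBAL_val[OF assms] c s1 s2 by (simp add: field_simps)
next
  fix \<mu> :: "int \<Rightarrow> real" assume "distOm \<mu>"
  moreover have "(\<Sum>x\<in>Om. unifOm x) = 1" by (simp add: unifOm_def Om_def)
  ultimately show "phiBAL (2*k) (PMAJ k) \<mu> \<le> phiBAL (2*k) (PMAJ k) unifOm"
    by (simp add: phiBAL_val[OF assms] distOm_def)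
qed

definition chi :: "nat set \<Rightarrow> (nat \<Rightarrow> int) \<Rightarrow> real" where
  "chi S x = (\<Prod>i\<in>S. real_of_int (x i))"

definition Fq :: "nat \<Rightarrow> ((nat \<Rightarrow> int) \<Rightarrow> real) \<Rightarrow> real \<Rightarrow> real" where
  "Fq n f c = (\<Sum>x\<in>OmK n. \<Sum>y\<in>OmK n. f x * f y *
       (\<Prod>i<n. (1 + c * of_int (x i) * of_int (y i)) / 4))"

lemma prod_expand:
  "(\<Prod>i<n. (1 + c * of_int (x i) * of_int (y i)) / 4)
     = (\<Sum>S\<in>Pow {..<n}. c ^ card S * (chi S x * chi S y)) / 4^n"
proof -
  have "(\<Prod>i<n. (1 + c * of_int (x i) * of_int (y i)) / (4::real))
      = (\<Prod>i<n. (c * of_int (x i) * of_int (y i) + 1)) / 4^n"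
    by (simp add: prod_dividef add.commute)
  also have "(\<Prod>i<n. (c * of_int (x i) * of_int (y i) + (1::real)))
      = (\<Sum>S\<in>Pow {..<n}. (\<Prod>i\<in>S. c * of_int (x i) * of_int (y i)) * (\<Prod>i\<in>{..<n}-S. 1))"
    by (rule prod_add) simp
  also have "... = (\<Sum>S\<in>Pow {..<n}. c ^ card S * (chi S x * chi S y))"
  proof (rule sum.cong)
    fix S assume "S \<in> Pow {..<n}"
    then have "finite S" by (auto intro: finite_subset)
    then show "(\<Prod>i\<in>S. c * of_int (x i) * of_int (y i)) * (\<Prod>i\<in>{..<n}-S. 1) = c ^ card S * (chi S x * chi S y)"
      by (simp add: chi_def prod.distrib)
  qed simp
  finally show ?thesis .
qed

lemma sq_sum: fixes u :: "'a \<Rightarrow> real"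
  shows "(\<Sum>x\<in>A. \<Sum>y\<in>A. a * (u x * u y)) = a * (\<Sum>x\<in>A. u x)^2"
proof -
  have "a * (\<Sum>x\<in>A. u x)^2 = a * ((\<Sum>x\<in>A. u x) * (\<Sum>x\<in>A. u x))" by (simp add: power2_eq_square)
  also have "... = (\<Sum>x\<in>A. \<Sum>y\<in>A. a * (u x * u y))" by (subst sum_product) (simp add: sum_distrib_left)
  finally show ?thesis by simp
qed

lemma prod_negf_real: "finite A \<Longrightarrow> (\<Prod>i\<in>A. - f i) = (-1)^card A * (prod f A :: real)"
  by (induction A rule: finite_induct) auto

lemma fourier:
  "Fq n f c = (\<Sum>S\<in>Pow {..<n}. c ^ card S * (\<Sum>x\<in>OmK n. f x * chi S x)^2) / 4^n"
proof -
  have "Fq n f c = (\<Sum>x\<in>OmK n. \<Sum>y\<in>OmK n. \<Sum>S\<in>Pow {..<n}.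
          (c ^ card S / 4^n) * ((f x * chi S x) * (f y * chi S y)))"
    unfolding Fq_def prod_expand
    by (intro sum.cong refl) (simp add: sum_distrib_left sum_divide_distrib mult_ac)
  also have "... = (\<Sum>x\<in>OmK n. \<Sum>S\<in>Pow {..<n}. \<Sum>y\<in>OmK n.
          (c ^ card S / 4^n) * ((f x * chi S x) * (f y * chi S y)))"
    by (intro sum.cong refl) (rule sum.swap)
  also have "... = (\<Sum>S\<in>Pow {..<n}. \<Sum>x\<in>OmK n. \<Sum>y\<in>OmK n.
          (c ^ card S / 4^n) * ((f x * chi S x) * (f y * chi S y)))"
    by (rule sum.swap)
  also have "... = (\<Sum>S\<in>Pow {..<n}. (c ^ card S / 4^n) * (\<Sum>x\<in>OmK n. f x * chi S x)^2)"
    by (intro sum.cong refl) (rule sq_sum)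
  finally show ?thesis by (simp add: sum_divide_distrib)
qed

lemma OmK_neq: assumes "x \<in> OmK n" "y \<in> OmK n" "x \<noteq> y" obtains i where "i < n" "x i \<noteq> y i"
proof -
  have "\<exists>i<n. x i \<noteq> y i"
  proof (rule ccontr)
    assume "\<not> ?thesis"
    then have "x = y" using assms(1,2) by (auto simp: OmK_mem fun_eq_iff) (metis not_le)
    then show False using assms(3) by simp
  qed
  then show ?thesis using that by blast
qed

lemma prod_diag: assumes "x \<in> OmK n" "y \<in> OmK n"
  shows "(\<Prod>i<n. (1 + of_int (x i) * of_int (y i)) / 4) = (if x = y then 1 / 2^n else (0::real))"
proof (cases "x = y")
  case True
  have "(\<Prod>i<n. (1 + of_int (x i) * of_int (y i)) / 4) = (\<Prod>i<n. (1/2::real))"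
  proof (rule prod.cong)
    fix i assume "i \<in> {..<n}"
    then have "x i \<in> Om" using assms by (auto simp: OmK_mem)
    then show "(1 + of_int (x i) * of_int (y i)) / 4 = (1/2::real)" using True by (auto simp: Om_iff)
  qed simp
  then show ?thesis using True by (simp add: power_one_over)
next
  case False
  then obtain i where i: "i < n" "x i \<noteq> y i" using OmK_neq assms by blast
  then have "x i \<in> Om" "y i \<in> Om" using assms by (auto simp: OmK_mem)
  then have "(1 + of_int (x i) * of_int (y i)) / 4 = (0::real)" using i by (auto simp: Om_iff)
  then show ?thesis using False i by (intro trans[OF prod_zero]) auto
qed

lemma parseval: "Fq n f 1 = (\<Sum>x\<in>OmK n. (f x)^2) / 2^n"
proof -
  have "Fq n f 1 = (\<Sum>x\<in>OmK n. \<Sum>y\<in>OmK n. if x = y then f x * f x / 2^n else 0)"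
    unfolding Fq_def mult_1 by (intro sum.cong refl) (simp only: prod_diag, simp)
  also have "... = (\<Sum>x\<in>OmK n. f x * f x / 2^n)" by (simp add: finite_OmK)
  finally show ?thesis by (simp add: power2_eq_square sum_divide_distrib)
qed

context pm begin

lemma chi_neg: "S \<subseteq> {..<2*k} \<Longrightarrow> chi S (negc \<sigma>) = (-1)^card S * chi S \<sigma>"
proof -
  assume S: "S \<subseteq> {..<2*k}"
  then have f: "finite S" by (auto intro: finite_subset)
  have "chi S (negc \<sigma>) = (\<Prod>i\<in>S. (-1) * real_of_int (\<sigma> i))"
    unfolding chi_def negc_def using S by (intro prod.cong) auto
  also have "... = (-1)^card S * chi S \<sigma>" using f by (simp add: prod_negf_real chi_def)
  finally show ?thesis .
qed

abbreviation "hh S \<equiv> (\<Sum>x\<in>OmK (2*k). psiMAJ k \<tau> \<theta> x * chi S x)"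

lemma hh_odd: assumes "S \<subseteq> {..<2*k}" "odd (card S)" shows "hh S = 0"
proof -
  have "hh S = (\<Sum>x\<in>OmK (2*k). 0) / 2"
  proof (rule inv_sum[where g=negc])
    fix x assume x: "x \<in> OmK (2*k)"
    show "psiMAJ k \<tau> \<theta> (negc x) * chi S (negc x) = 0 - psiMAJ k \<tau> \<theta> x * chi S x"
      using assms by (simp add: psi_neg[OF x] chi_neg)
  qed (auto simp: finite_OmK negc_OmK)
  then show ?thesis by simp
qed

lemma hh_empty: "hh {} = 2^(2*k)/2"
  using psi_sum by (simp add: chi_def)

lemma hh_parseval: "(\<Sum>S\<in>Pow {..<2*k}. (hh S)^2) = 4^(2*k) / 2"
proof -
  have "(\<Sum>S\<in>Pow {..<2*k}. (hh S)^2) / 4^(2*k) = Fq (2*k) (psiMAJ k \<tau> \<theta>) 1"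
    by (simp add: fourier)
  also have "... = (\<Sum>x\<in>OmK (2*k). psiMAJ k \<tau> \<theta> x) / 2^(2*k)"
    unfolding parseval
  proof -
    have "\<And>x. (psiMAJ k \<tau> \<theta> x)^2 = psiMAJ k \<tau> \<theta> x"
      using psiMAJ_01 by (metis one_power2 power_zero_numeral)
    then show "(\<Sum>x\<in>OmK (2*k). (psiMAJ k \<tau> \<theta> x)^2) / 2^(2*k) = (\<Sum>x\<in>OmK (2*k). psiMAJ k \<tau> \<theta> x) / 2^(2*k)"
      by simp
  qed
  also have "... = 1/2" using psi_sum by simp
  finally show ?thesis by (simp add: field_simps)
qed

lemma hh_exists: obtains S where "S \<in> Pow {..<2*k}" "S \<noteq> {}" "hh S \<noteq> 0"
proof (rule ccontr)
  assume "\<not> thesis"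
  then have z: "\<And>S. S \<in> Pow {..<2*k} - {{}} \<Longrightarrow> hh S = 0" using that by blast
  have "(\<Sum>S\<in>Pow {..<2*k}. (hh S)^2) = (hh {})^2 + (\<Sum>S\<in>Pow {..<2*k} - {{}}. (hh S)^2)"
    by (subst sum.remove[of _ "{}"]) auto
  also have "(\<Sum>S\<in>Pow {..<2*k} - {{}}. (hh S)^2) = 0" using z by simp
  finally have "(4::real)^(2*k) / 2 = (2^(2*k)/2)^2" using hh_parseval hh_empty by simp
  also have "(2^(2*k)/2)^2 = (4::real)^(2*k) / 4"
  proof -
    have a: "(4::real)^(2*k) = (2^2)^(2*k)" by simp
    have b: "((2::real)^2)^(2*k) = 2^(2*(2*k))" by (simp only: power_mult)
    have c: "((2::real)^(2*k))^2 = 2^(2*(2*k))" by (simp only: power_even_eq)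
    have "(2^(2*k)/2)^2 = ((2::real)^(2*k))^2 / 4" by (simp add: power_divide)
    then show ?thesis unfolding a b c .
  qed
  finally show False by simp
qed

lemma F_strict: assumes "c \<noteq> 0"
  shows "Fq (2*k) (psiMAJ k \<tau> \<theta>) 0 < Fq (2*k) (psiMAJ k \<tau> \<theta>) c"
proof -
  obtain S0 where S0: "S0 \<in> Pow {..<2*k}" "S0 \<noteq> {}" "hh S0 \<noteq> 0" using hh_exists by blast
  have diff: "Fq (2*k) (psiMAJ k \<tau> \<theta>) c - Fq (2*k) (psiMAJ k \<tau> \<theta>) 0
      = (\<Sum>S\<in>Pow {..<2*k}. (c ^ card S - 0 ^ card S) * (hh S)^2) / 4^(2*k)"
    by (simp add: fourier diff_divide_distrib[symmetric] sum_subtractf[symmetric] left_diff_distrib)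
  have nonneg: "0 \<le> (c ^ card S - 0 ^ card S) * (hh S)^2" if "S \<in> Pow {..<2*k}" for S
  proof (cases "odd (card S)")
    case True then show ?thesis using hh_odd[of S] that by simp
  next
    case False
    then have "0 \<le> c ^ card S" by (simp add: zero_le_even_power)
    then show ?thesis by (cases "card S = 0") (auto simp: power_0_left)
  qed
  have fin0: "finite S0" using S0(1) by (auto intro: finite_subset)
  have ev: "even (card S0)" using hh_odd[of S0] S0 by auto
  have cS: "card S0 \<noteq> 0" using fin0 S0(2) by simp
  have "0 < c ^ card S0" using ev assms by (simp add: zero_less_power_eq)
  then have pos: "0 < (c ^ card S0 - 0 ^ card S0) * (hh S0)^2" using cS S0(3) by (simp add: power_0_left)
  have "0 < (\<Sum>S\<in>Pow {..<2*k}. (c ^ card S - 0 ^ card S) * (hh S)^2)"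
    by (rule sum_pos2[of "Pow {..<2*k}" S0]) (use pos nonneg S0(1) in auto)
  then have "0 < Fq (2*k) (psiMAJ k \<tau> \<theta>) c - Fq (2*k) (psiMAJ k \<tau> \<theta>) 0"
    unfolding diff by simp
  then show ?thesis by simp
qed

end

lemma coup_param: assumes "coupOm \<rho>"
  obtains c where "\<And>a b. a \<in> Om \<Longrightarrow> b \<in> Om \<Longrightarrow> \<rho> (a,b) = (1 + c * of_int a * of_int b) / 4"
    and "\<rho> \<noteq> unifOm2 \<Longrightarrow> c \<noteq> 0"
proof -
  have r1: "\<rho> (1,-1) + \<rho> (1,1) = 1/2" and r2: "\<rho> (-1,-1) + \<rho> (-1,1) = 1/2"
   and c1: "\<rho> (-1,1) + \<rho> (1,1) = 1/2" and c2: "\<rho> (-1,-1) + \<rho> (1,-1) = 1/2"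
    using assms unfolding coupOm_def by (auto simp: Om_def)
  define c where "c = 4 * \<rho> (1,1) - 1"
  have e: "\<rho> (a,b) = (1 + c * of_int a * of_int b) / 4" if "a \<in> Om" "b \<in> Om" for a b
    using that r1 r2 c1 c2 unfolding c_def by (auto simp: Om_iff)
  moreover have "c \<noteq> 0" if "\<rho> \<noteq> unifOm2"
  proof
    assume c0: "c = 0"
    have "\<rho> z = unifOm2 z" for z
    proof (cases "z \<in> Om \<times> Om")
      case True then show ?thesis using e[of "fst z" "snd z"] c0 by (cases z) (auto simp: unifOm2_def)
    next
      case False then show ?thesis using assms by (cases z) (auto simp: unifOm2_def coupOm_def)
    qed
    then show False using that by auto
  qed
  ultimately show ?thesis using that by blast
qed

lemma sum_swap3: "(\<Sum>x\<in>A. \<Sum>y\<in>B. \<Sum>z\<in>C. g x y z) = (\<Sum>z\<in>C. \<Sum>x\<in>A. \<Sum>y\<in>B. g x y z)"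
proof -
  have "(\<Sum>x\<in>A. \<Sum>y\<in>B. \<Sum>z\<in>C. g x y z) = (\<Sum>x\<in>A. \<Sum>z\<in>C. \<Sum>y\<in>B. g x y z)"
    by (intro sum.cong refl) (rule sum.swap)
  also have "... = (\<Sum>z\<in>C. \<Sum>x\<in>A. \<Sum>y\<in>B. g x y z)" by (rule sum.swap)
  finally show ?thesis .
qed

lemma phiMIN_Fq: assumes "\<And>a b. a \<in> Om \<Longrightarrow> b \<in> Om \<Longrightarrow> \<rho> (a,b) = (1 + c * of_int a * of_int b) / 4"
  shows "phiMIN (2*k) (PMAJ k) \<rho> = (\<Sum>\<psi>\<in>PsiMAJ k. Fq (2*k) \<psi> c) / card (PsiMAJ k)"
proof -
  have "phiMIN (2*k) (PMAJ k) \<rho> = (\<Sum>\<sigma>\<in>OmK (2*k). \<Sum>\<tau>\<in>OmK (2*k).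
      (\<Sum>\<psi>\<in>PsiMAJ k. \<psi> \<sigma> * \<psi> \<tau> * (\<Prod>i<2*k. (1 + c * of_int (\<sigma> i) * of_int (\<tau> i)) / 4)) / card (PsiMAJ k))"
    unfolding phiMIN_def expect_PMAJ
  proof (intro sum.cong refl)
    fix \<sigma> \<tau> assume s: "\<sigma> \<in> OmK (2*k)" "\<tau> \<in> OmK (2*k)"
    have "(\<Prod>i<2*k. \<rho> (\<sigma> i, \<tau> i)) = (\<Prod>i<2*k. (1 + c * of_int (\<sigma> i) * of_int (\<tau> i)) / 4)"
      using s by (intro prod.cong refl assms) (auto simp: OmK_mem)
    then show "(\<Sum>\<psi>\<in>PsiMAJ k. \<psi> \<sigma> * \<psi> \<tau>) / real (card (PsiMAJ k)) * (\<Prod>i<2*k. \<rho> (\<sigma> i, \<tau> i)) =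
      (\<Sum>\<psi>\<in>PsiMAJ k. \<psi> \<sigma> * \<psi> \<tau> * (\<Prod>i<2*k. (1 + c * of_int (\<sigma> i) * of_int (\<tau> i)) / 4)) / card (PsiMAJ k)"
      by (simp add: sum_distrib_right)
  qed
  also have "... = (\<Sum>\<psi>\<in>PsiMAJ k. Fq (2*k) \<psi> c) / card (PsiMAJ k)"
    unfolding Fq_def sum_divide_distrib[symmetric] by (subst sum_swap3) (rule refl)
  finally show ?thesis .
qed

lemma MIN: assumes "odd k" "k \<ge> 3" shows "MIN_cond (2*k) (PMAJ k)"
  unfolding MIN_cond_def
proof (intro allI impI)
  fix \<rho> assume r: "coupOm \<rho>" "\<rho> \<noteq> unifOm2"
  obtain c where c: "\<And>a b. a \<in> Om \<Longrightarrow> b \<in> Om \<Longrightarrow> \<rho> (a,b) = (1 + c * of_int a * of_int b) / 4" "c \<noteq> 0"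
    using coup_param[OF r(1)] r(2) by metis
  have u: "\<And>a b. a \<in> Om \<Longrightarrow> b \<in> Om \<Longrightarrow> unifOm2 (a,b) = (1 + 0 * of_int a * of_int b) / 4"
    by (simp add: unifOm2_def)
  have "(\<Sum>\<psi>\<in>PsiMAJ k. Fq (2*k) \<psi> 0) < (\<Sum>\<psi>\<in>PsiMAJ k. Fq (2*k) \<psi> c)"
  proof (rule sum_strict_mono[OF finite_Psi Psi_ne])
    fix \<psi> assume "\<psi> \<in> PsiMAJ k"
    then obtain \<tau> \<theta> where e: "\<psi> = psiMAJ k \<tau> \<theta>" "pm k \<tau> \<theta>" using Psi_pm assms by blast
    show "Fq (2*k) \<psi> 0 < Fq (2*k) \<psi> c" using pm.F_strict[OF e(2) c(2)] e(1) by simp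
  qed
  then have "(\<Sum>\<psi>\<in>PsiMAJ k. Fq (2*k) \<psi> 0) / card (PsiMAJ k) < (\<Sum>\<psi>\<in>PsiMAJ k. Fq (2*k) \<psi> c) / card (PsiMAJ k)"
    using card_Psi_pos[of k] by (intro divide_strict_right_mono) auto
  then show "phiMIN (2*k) (PMAJ k) unifOm2 < phiMIN (2*k) (PMAJ k) \<rho>"
    using phiMIN_Fq[OF c(1), of k] phiMIN_Fq[where c=0 and \<rho>=unifOm2 and k=k] u by simp
qed

definition vars :: "('c \<Rightarrow> 'v list) \<Rightarrow> 'c set \<Rightarrow> 'v set" where
  "vars dv G = (\<Union>a\<in>G. set (dv a))"

definition Ed :: "('c \<Rightarrow> 'v list) \<Rightarrow> 'c set \<Rightarrow> ('v \<times> 'c) set" where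
  "Ed dv G = {(v, a). a \<in> G \<and> v \<in> set (dv a)}"

lemma finite_vars: "finite G \<Longrightarrow> finite (vars dv G)"
  by (auto simp: vars_def)

lemma card_Ed: assumes "finite G" shows "card (Ed dv G) = (\<Sum>a\<in>G. card (set (dv a)))"
proof -
  have e: "Ed dv G = (\<lambda>(a,v). (v,a)) ` (SIGMA a:G. set (dv a))" by (auto simp: Ed_def)
  have i: "inj_on (\<lambda>(a,v). (v,a)) (SIGMA a:G. set (dv a))" by (auto simp: inj_on_def)
  show ?thesis unfolding e card_image[OF i] using assms by (simp add: card_SigmaI)
qed

lemma double_count: assumes "finite G"
  shows "(\<Sum>a\<in>G. card {v\<in>set (dv a). Q v}) = (\<Sum>v\<in>{v\<in>vars dv G. Q v}. card {a\<in>G. v \<in> set (dv a)})"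
proof -
  have f1: "finite {v\<in>vars dv G. Q v}" using finite_vars[OF assms, of dv] by auto
  have "(\<Sum>a\<in>G. card {v\<in>set (dv a). Q v}) = card (SIGMA a:G. {v\<in>set (dv a). Q v})"
    using assms by (simp add: card_SigmaI)
  also have "(SIGMA a:G. {v\<in>set (dv a). Q v}) = (\<lambda>(v,a). (a,v)) ` (SIGMA v:{v\<in>vars dv G. Q v}. {a\<in>G. v \<in> set (dv a)})"
    by (auto simp: vars_def)
  also have "card ... = card (SIGMA v:{v\<in>vars dv G. Q v}. {a\<in>G. v \<in> set (dv a)})"
    by (rule card_image) (auto simp: inj_on_def)
  also have "... = (\<Sum>v\<in>{v\<in>vars dv G. Q v}. card {a\<in>G. v \<in> set (dv a)})"
    using f1 assms by (simp add: card_SigmaI)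
  finally show ?thesis .
qed

lemma card_ge2: assumes "finite X" "a \<in> X" shows "2 \<le> card X \<longleftrightarrow> (\<exists>b\<in>X. b \<noteq> a)"
proof
  assume "2 \<le> card X"
  then have "card (X - {a}) \<ge> 1" using assms by simp
  then have "X - {a} \<noteq> {}" by (metis card.empty not_one_le_zero)
  then show "\<exists>b\<in>X. b \<noteq> a" by auto
next
  assume "\<exists>b\<in>X. b \<noteq> a"
  then obtain b where "b \<in> X" "b \<noteq> a" by blast
  then have "card {a,b} \<le> card X" using assms by (intro card_mono) auto
  then show "2 \<le> card X" using \<open>b \<noteq> a\<close> by simp
qed

lemma select_constraint:
  assumes fin: "finite G" and ne: "G \<noteq> {}"
    and sparse: "(\<Sum>a\<in>G. card (set (dv a))) \<le> card (vars dv G) + card G"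
  shows "\<exists>a\<in>G. card (set (dv a) \<inter> vars dv (G - {a})) \<le> 2"
proof (rule ccontr)
  assume "\<not> ?thesis"
  then have big: "\<And>a. a \<in> G \<Longrightarrow> 3 \<le> card (set (dv a) \<inter> vars dv (G - {a}))" by force
  define d where "d v = card {a\<in>G. v \<in> set (dv a)}" for v
  define W where "W = vars dv G"
  define W2 where "W2 = {v\<in>W. 2 \<le> d v}"
  define W1 where "W1 = {v\<in>W. \<not> 2 \<le> d v}"
  have finW: "finite W" using finite_vars[OF fin] by (simp add: W_def)
  have sh: "set (dv a) \<inter> vars dv (G - {a}) = {v\<in>set (dv a). 2 \<le> d v}" if a: "a \<in> G" for a
  proof -
    have "v \<in> vars dv (G - {a}) \<longleftrightarrow> 2 \<le> d v" if "v \<in> set (dv a)" for v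
      unfolding d_def using card_ge2[of "{a\<in>G. v \<in> set (dv a)}" a] fin a that
      by (auto simp: vars_def)
    then show ?thesis by auto
  qed
  have dc1: "(\<Sum>a\<in>G. card (set (dv a))) = (\<Sum>v\<in>W. d v)"
    using double_count[OF fin, of dv "\<lambda>_. True"] by (simp add: W_def d_def)
  have dc2: "(\<Sum>a\<in>G. card {v\<in>set (dv a). 2 \<le> d v}) = (\<Sum>v\<in>W2. d v)"
    using double_count[OF fin, of dv "\<lambda>v. 2 \<le> d v"] by (simp add: W_def W2_def d_def)
  have "3 * card G = (\<Sum>a\<in>G. 3)" by simp
  also have "... \<le> (\<Sum>a\<in>G. card {v\<in>set (dv a). 2 \<le> d v})"
    using big sh by (intro sum_mono) auto
  finally have A: "3 * card G \<le> (\<Sum>v\<in>W2. d v)" using dc2 by simp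
  have WU: "W = W1 \<union> W2" "W1 \<inter> W2 = {}" by (auto simp: W1_def W2_def)
  have fW1: "finite W1" "finite W2" using finW by (auto simp: W1_def W2_def)
  have d1: "d v = 1" if "v \<in> W1" for v
  proof -
    from that obtain a where "a \<in> G" "v \<in> set (dv a)" by (auto simp: W1_def W_def vars_def)
    then have "d v \<ge> 1" unfolding d_def using fin
      by (metis (mono_tags, lifting) One_nat_def Suc_leI card_gt_0_iff empty_iff finite_subset mem_Collect_eq subsetI)
    then show ?thesis using that by (auto simp: W1_def)
  qed
  have "(\<Sum>v\<in>W. d v) = (\<Sum>v\<in>W1. d v) + (\<Sum>v\<in>W2. d v)"
    unfolding WU(1) using fW1 WU(2) by (rule sum.union_disjoint)
  also have "(\<Sum>v\<in>W1. d v) = card W1" using d1 by simp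
  finally have B: "(\<Sum>v\<in>W. d v) = card W1 + (\<Sum>v\<in>W2. d v)" .
  have cW: "card W = card W1 + card W2" unfolding WU(1) using fW1 WU(2) by (rule card_Un_disjoint)
  have C: "2 * card W2 \<le> (\<Sum>v\<in>W2. d v)"
  proof -
    have "2 * card W2 = (\<Sum>v\<in>W2. 2)" by simp
    also have "... \<le> (\<Sum>v\<in>W2. d v)" by (intro sum_mono) (auto simp: W2_def)
    finally show ?thesis .
  qed
  have "card G > 0" using fin ne by (simp add: card_gt_0_iff)
  moreover have "(\<Sum>a\<in>G. card (set (dv a))) \<le> card W + card G" using sparse by (simp add: W_def)
  ultimately show False using dc1 B cW A C by linarith
qed

lemma tuple_upd: assumes "distinct xs" "length xs = K" "p < K"
  shows "tuple_of K (\<sigma>(xs!p := - \<sigma> (xs!p))) xs = flipc p (tuple_of K \<sigma> xs)"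
proof (rule ext)
  fix i show "tuple_of K (\<sigma>(xs!p := - \<sigma> (xs!p))) xs i = flipc p (tuple_of K \<sigma> xs) i"
    using assms nth_eq_iff_index_eq[OF assms(1), of i p] by (auto simp: tuple_of_def flipc_def)
qed

lemma tuple_OmK: assumes "length xs = K" "\<forall>v\<in>set xs. \<sigma> v \<in> Om"
  shows "tuple_of K \<sigma> xs \<in> OmK K"
  using assms by (auto simp: tuple_of_def OmK_mem)

lemma tuple_cong: assumes "length xs = K" "\<forall>v\<in>set xs. \<sigma> v = \<sigma>' v"
  shows "tuple_of K \<sigma> xs = tuple_of K \<sigma>' xs"
  using assms by (auto simp: tuple_of_def fun_eq_iff)

lemma sat_induct:
  assumes k: "odd k" "k \<ge> 3"
  and cons: "\<forall>a\<in>F. length (dv a) = 2*k \<and> distinct (dv a) \<and> set (dv a) \<subseteq> V \<and> ps a \<in> PsiMAJ k"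
  and sparse: "\<forall>G\<subseteq>F. G \<noteq> {} \<longrightarrow> (\<Sum>a\<in>G. card (set (dv a))) \<le> card (vars dv G) + card G"
  and finG: "finite G" and GF: "G \<subseteq> F"
  shows "\<exists>\<sigma>. (\<forall>v\<in>V. \<sigma> v \<in> Om) \<and> (\<forall>a\<in>G. ps a (tuple_of (2*k) \<sigma> (dv a)) = 1)"
  using finG GF
proof (induction G rule: finite_psubset_induct)
  case (psubset G)
  show ?case
  proof (cases "G = {}")
    case True
    then show ?thesis by (intro exI[of _ "\<lambda>_. 1"]) (auto simp: Om_iff)
  next
    case False
    obtain a where aG: "a \<in> G" and few: "card (set (dv a) \<inter> vars dv (G - {a})) \<le> 2"
      using select_constraint[OF psubset.hyps(1) False sparse[rule_format, OF psubset.prems False]] by blast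
    have aF: "a \<in> F" using aG psubset.prems by auto
    have la: "length (dv a) = 2*k" and da: "distinct (dv a)" and sa: "set (dv a) \<subseteq> V"
      and pa: "ps a \<in> PsiMAJ k" using cons aF by auto
    obtain \<tau> \<theta> where pse: "ps a = psiMAJ k \<tau> \<theta>" and pmk: "pm k \<tau> \<theta>" using Psi_pm[OF pa k] by blast
    obtain \<sigma> where s1: "\<forall>v\<in>V. \<sigma> v \<in> Om" and s2: "\<forall>b\<in>G - {a}. ps b (tuple_of (2*k) \<sigma> (dv b)) = 1"
      using psubset.IH[of "G - {a}"] aG psubset.prems by blast
    have "\<exists>j<k. dv a ! \<theta> j \<notin> vars dv (G - {a})"
    proof (rule ccontr)
      assume neg: "\<not> (\<exists>j<k. dv a ! \<theta> j \<notin> vars dv (G - {a}))"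
      have inn: "dv a ! \<theta> j \<in> set (dv a) \<inter> vars dv (G - {a})" if jk: "j < k" for j
      proof -
        have "\<theta> j < 2*k" using pm.th_lt[OF pmk] jk by simp
        then have "dv a ! \<theta> j \<in> set (dv a)" using la by simp
        moreover have "dv a ! \<theta> j \<in> vars dv (G - {a})" using neg jk by blast
        ultimately show ?thesis by blast
      qed
      have lt: "\<theta> 0 < 2*k" "\<theta> 1 < 2*k" "\<theta> 2 < 2*k" using pm.th_lt[OF pmk] k(2) by auto
      have ne: "\<theta> 0 \<noteq> \<theta> 1" "\<theta> 0 \<noteq> \<theta> 2" "\<theta> 1 \<noteq> \<theta> 2" using pm.th_inj[OF pmk, of 0 1] pm.th_inj[OF pmk, of 0 2] pm.th_inj[OF pmk, of 1 2] k(2) by auto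
      have ne2: "dv a ! \<theta> 0 \<noteq> dv a ! \<theta> 1" "dv a ! \<theta> 0 \<noteq> dv a ! \<theta> 2" "dv a ! \<theta> 1 \<noteq> dv a ! \<theta> 2"
        using ne lt nth_eq_iff_index_eq[OF da] la by auto
      have "card {dv a ! \<theta> 0, dv a ! \<theta> 1, dv a ! \<theta> 2} \<le> card (set (dv a) \<inter> vars dv (G - {a}))"
        using inn k(2) by (intro card_mono) auto
      then show False using ne2 few by simp
    qed
    then obtain j where j: "j < k" and xn: "dv a ! \<theta> j \<notin> vars dv (G - {a})" by blast
    define p where "p = \<theta> j"
    define x where "x = dv a ! p"
    have pl: "p < 2*k" using pm.th_lt[OF pmk] j unfolding p_def by auto
    have xa: "x \<in> set (dv a)" using pl la unfolding x_def by auto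
    have xo: "\<sigma> x \<in> Om" using s1 xa sa by auto
    define t where "t = tuple_of (2*k) \<sigma> (dv a)"
    have tO: "t \<in> OmK (2*k)" unfolding t_def using la s1 sa by (intro tuple_OmK) auto
    define \<sigma>' where "\<sigma>' = (if psiMAJ k \<tau> \<theta> t = 1 then \<sigma> else \<sigma>(x := - \<sigma> x))"
    have s'1: "\<forall>v\<in>V. \<sigma>' v \<in> Om" using s1 xo by (auto simp: \<sigma>'_def Om_iff)
    have s'a: "ps a (tuple_of (2*k) \<sigma>' (dv a)) = 1"
    proof (cases "psiMAJ k \<tau> \<theta> t = 1")
      case True then show ?thesis by (simp add: \<sigma>'_def pse t_def)
    next
      case False
      then have t0: "psiMAJ k \<tau> \<theta> t = 0" using psiMAJ_01 by metis
      have "tuple_of (2*k) \<sigma>' (dv a) = flipc p t"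
        unfolding \<sigma>'_def t_def x_def using False tuple_upd[OF da la pl] by (simp add: t_def)
      then show ?thesis using pm.psi_flip[OF pmk tO j] t0 pse by (simp add: p_def)
    qed
    have s'b: "ps b (tuple_of (2*k) \<sigma>' (dv b)) = 1" if b: "b \<in> G - {a}" for b
    proof -
      have "x \<notin> set (dv b)" using xn b unfolding x_def p_def vars_def by auto
      moreover have "length (dv b) = 2*k" using b psubset.prems cons by auto
      ultimately have "tuple_of (2*k) \<sigma>' (dv b) = tuple_of (2*k) \<sigma> (dv b)"
        by (intro tuple_cong) (auto simp: \<sigma>'_def)
      then show ?thesis using s2 b by simp
    qed
    show ?thesis using s'1 s'a s'b by blast
  qed
qed

fun ed :: "('v + 'c) \<times> ('v + 'c) \<Rightarrow> 'v \<times> 'c" where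
  "ed (Inl v, Inr a) = (v, a)"
| "ed (Inr a, Inl v) = (v, a)"
| "ed _ = undefined"

lemma R_cases: "(x,z) \<in> bigraph dv F \<Longrightarrow>
   (\<exists>v a. x = Inl v \<and> z = Inr a \<and> a\<in>F \<and> v\<in>set (dv a)) \<or> (\<exists>v a. x = Inr a \<and> z = Inl v \<and> a\<in>F \<and> v\<in>set (dv a))"
  by (auto simp: bigraph_def)

lemma ed_inj: "(x,z) \<in> bigraph dv F \<Longrightarrow> (y,w) \<in> bigraph dv F \<Longrightarrow> ed (x,z) = ed (y,w) \<Longrightarrow>
   (x = y \<and> z = w) \<or> (x = w \<and> z = y)"
  by (auto simp: bigraph_def)

lemma card_sum_img: "finite A \<Longrightarrow> finite B \<Longrightarrow> card (Inl ` A \<union> Inr ` B) = card A + card B"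
  by (subst card_Un_disjoint) (auto simp: card_image)

lemma sparse_graph:
  fixes V :: "'v set" and F :: "'c set"
  assumes finV: "finite V" and finF: "finite F"
  and sub: "\<forall>a\<in>F. set (dv a) \<subseteq> V"
  and conn: "\<forall>x\<in>Inl ` V \<union> Inr ` F. \<forall>y\<in>Inl ` V \<union> Inr ` F. (x, y) \<in> (bigraph dv F)\<^sup>*"
  and cnt: "card {(v, a). a \<in> F \<and> v \<in> set (dv a)} = card V + card F"
  and GF: "G \<subseteq> F" and Gne: "G \<noteq> {}"
  shows "card (Ed dv G) \<le> card (vars dv G) + card G"
proof -
  define Vt where "Vt = Inl ` V \<union> Inr ` F"
  define R where "R = bigraph dv F"
  define H where "H = Inl ` vars dv G \<union> Inr ` G"
  have finG: "finite G" using GF finF by (rule finite_subset)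
  have varsV: "vars dv G \<subseteq> V" using sub GF by (auto simp: vars_def)
  have HV: "H \<subseteq> Vt" using varsV GF by (auto simp: H_def Vt_def)
  obtain h where hH: "h \<in> H" using Gne by (auto simp: H_def)
  define dist where "dist x = (LEAST n. \<exists>y\<in>H. (x,y) \<in> R ^^ n)" for x
  have D1: "\<exists>y\<in>H. (x,y) \<in> R ^^ (dist x)" if x: "x \<in> Vt" for x
  proof -
    have "(x,h) \<in> R\<^sup>*" using conn x hH HV by (auto simp: R_def Vt_def)
    then obtain n where "(x,h) \<in> R ^^ n" using rtrancl_power by blast
    then have "\<exists>n. \<exists>y\<in>H. (x,y) \<in> R ^^ n" using hH by blast
    then show ?thesis unfolding dist_def by (rule LeastI_ex)
  qed
  have D2: "dist x \<le> n" if "(x,y) \<in> R ^^ n" "y \<in> H" for x y n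
    unfolding dist_def using that by (intro Least_le) blast
  have RV: "z \<in> Vt" if "(x,z) \<in> R" for x z
    using that sub by (auto simp: R_def bigraph_def Vt_def)
  have step: "\<exists>z. (x,z) \<in> R \<and> dist z < dist x" if x: "x \<in> Vt - H" for x
  proof -
    obtain y where y: "y \<in> H" "(x,y) \<in> R ^^ (dist x)" using D1 x by blast
    show ?thesis
    proof (cases "dist x")
      case 0 then show ?thesis using y x by auto
    next
      case (Suc m)
      then obtain z where "(x,z) \<in> R" "(z,y) \<in> R ^^ m" using y relpow_Suc_D2 by metis
      then show ?thesis using D2[of z y m] y Suc by auto
    qed
  qed
  define nxt where "nxt x = (SOME z. (x,z) \<in> R \<and> dist z < dist x)" for x
  have nx: "(x, nxt x) \<in> R \<and> dist (nxt x) < dist x" if "x \<in> Vt - H" for x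
    unfolding nxt_def using step[OF that] by (rule someI_ex)
  have mapin: "ed (x, nxt x) \<in> Ed dv F - Ed dv G" if x: "x \<in> Vt - H" for x
  proof -
    have r: "(x, nxt x) \<in> bigraph dv F" using nx[OF x] by (simp add: R_def)
    from R_cases[OF r] show ?thesis
    proof
      assume "\<exists>v a. x = Inl v \<and> nxt x = Inr a \<and> a\<in>F \<and> v\<in>set (dv a)"
      then obtain v a where e: "x = Inl v" "nxt x = Inr a" "a\<in>F" "v\<in>set (dv a)" by blast
      have "v \<notin> vars dv G" using x e(1) by (auto simp: H_def)
      then show ?thesis using e by (auto simp: Ed_def vars_def)
    next
      assume "\<exists>v a. x = Inr a \<and> nxt x = Inl v \<and> a\<in>F \<and> v\<in>set (dv a)"
      then obtain v a where e: "x = Inr a" "nxt x = Inl v" "a\<in>F" "v\<in>set (dv a)" by blast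
      have "a \<notin> G" using x e(1) by (auto simp: H_def)
      then show ?thesis using e by (auto simp: Ed_def)
    qed
  qed
  have inj: "inj_on (\<lambda>x. ed (x, nxt x)) (Vt - H)"
  proof (rule inj_onI)
    fix x y assume x: "x \<in> Vt - H" and y: "y \<in> Vt - H" and eq: "ed (x, nxt x) = ed (y, nxt y)"
    have rx: "(x, nxt x) \<in> bigraph dv F" and ry: "(y, nxt y) \<in> bigraph dv F"
      using nx[OF x] nx[OF y] by (auto simp: R_def)
    show "x = y"
    proof (rule ccontr)
      assume "x \<noteq> y"
      then have "x = nxt y" "nxt x = y" using ed_inj[OF rx ry eq] by auto
      then show False using nx[OF x] nx[OF y] by auto
    qed
  qed
  have finEF: "finite (Ed dv F)"
  proof (rule finite_subset)
    show "Ed dv F \<subseteq> V \<times> F" using sub by (auto simp: Ed_def)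
  qed (use finV finF in auto)
  have c1: "card (Vt - H) \<le> card (Ed dv F - Ed dv G)"
    by (rule card_inj_on_le[OF inj]) (use mapin finEF in auto)
  have cVt: "card Vt = card V + card F" unfolding Vt_def using finV finF by (rule card_sum_img)
  have finvars: "finite (vars dv G)" using finite_vars[OF finG] by blast
  have cH: "card H = card (vars dv G) + card G" unfolding H_def using finvars finG by (rule card_sum_img)
  have finVt: "finite Vt" using finV finF by (simp add: Vt_def)
  have cD: "card (Vt - H) = card Vt - card H" using HV finVt by (meson card_Diff_subset finite_subset)
  have HVc: "card H \<le> card Vt" using HV finVt by (rule card_mono[rotated])
  have EGF: "Ed dv G \<subseteq> Ed dv F" using GF by (auto simp: Ed_def)
  have cE: "card (Ed dv F - Ed dv G) = card (Ed dv F) - card (Ed dv G)"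
    using EGF finEF by (meson card_Diff_subset finite_subset)
  have EGc: "card (Ed dv G) \<le> card (Ed dv F)" using EGF finEF by (rule card_mono[rotated])
  have cEF: "card (Ed dv F) = card V + card F" using cnt by (simp add: Ed_def)
  show ?thesis using c1 cVt cH cD HVc cE EGc cEF by linarith
qed

lemma UNI: assumes k: "odd k" "k \<ge> 3"
  and u: "unicyclic_csp (2*k) (PsiMAJ k) V F dv ps"
  shows "satisfiable_csp (2*k) V F dv ps"
proof -
  have finV: "finite V" and finF: "finite F"
    and cons: "\<forall>a\<in>F. length (dv a) = 2*k \<and> distinct (dv a) \<and> set (dv a) \<subseteq> V \<and> ps a \<in> PsiMAJ k"
    and conn: "\<forall>x\<in>Inl ` V \<union> Inr ` F. \<forall>y\<in>Inl ` V \<union> Inr ` F. (x, y) \<in> (bigraph dv F)\<^sup>*"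
    and cnt: "card {(v, a). a \<in> F \<and> v \<in> set (dv a)} = card V + card F"
    using u unfolding unicyclic_csp_def by auto
  have sub: "\<forall>a\<in>F. set (dv a) \<subseteq> V" using cons by auto
  have sparse: "\<forall>G\<subseteq>F. G \<noteq> {} \<longrightarrow> (\<Sum>a\<in>G. card (set (dv a))) \<le> card (vars dv G) + card G"
  proof (intro allI impI)
    fix G assume G: "G \<subseteq> F" "G \<noteq> {}"
    have "finite G" using G(1) finF by (rule finite_subset)
    then show "(\<Sum>a\<in>G. card (set (dv a))) \<le> card (vars dv G) + card G"
      using sparse_graph[OF finV finF sub conn cnt G] card_Ed by metis
  qed
  obtain \<sigma> where s: "\<forall>v\<in>V. \<sigma> v \<in> Om" "\<forall>a\<in>F. ps a (tuple_of (2*k) \<sigma> (dv a)) = 1"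
    using sat_induct[OF k cons sparse finF subset_refl] by blast
  have "(\<Prod>a\<in>F. ps a (tuple_of (2*k) \<sigma> (dv a))) = 1" using s(2) by (rule prod.neutral)
  then show ?thesis unfolding satisfiable_csp_def using s(1) by (intro exI[of _ \<sigma>]) simp
qed

theorem mainTheorem16:
  fixes k :: nat
  assumes "odd k" and "k \<ge> 3"
  shows "SYM_cond (2*k) (PsiMAJ k) (PMAJ k)
       \<and> BAL_cond (2*k) (PMAJ k)
       \<and> MIN_cond (2*k) (PMAJ k)
       \<and> (\<forall>(V :: 'v set) (F :: 'c set) dv ps.
            unicyclic_csp (2*k) (PsiMAJ k) V F dv ps \<longrightarrow> satisfiable_csp (2*k) V F dv ps)"
  using SYM[OF assms] BAL[OF assms] MIN[OF assms] UNI[OF assms] by blast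

end
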